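(* Let $Q$ be a finite connected quandle, $e\in Q$, and let $K_1,K_2$ be oriented knots. If there is a knot $P$ such that $\mathrm{Col}_Q(K_1\# P)\neq \mathrm{Col}_Q(K_2\# P)$, then $\Psi^e_Q(K_1)\neq\Psi^e_Q(K_2)$.
   Context: A quandle is a set $Q$ with operation $*$ satisfying $a*a=a$; unique right division ($\forall b,c\ \exists! a: a*b=c$); and $(a*b)*c=(a*c)*(b*c)$. $R_a(x)=x*a$; $\mathrm{Inn}(Q)$ is the group generated by the $R_a$; $Q$ is connected if $\mathrm{Inn}(Q)$ is transitive on $Q$. A coloring of an oriented knot or tangle diagram by $Q$ assigns elements of $Q$ to arcs so that at each crossing with over-arc color $y$ and incoming under-arc color $x$ (standard sign convention) the other under-arc has color $x*y$. $\mathrm{Col}_Q(K)$ is the number of colorings of a diagram of $K$ by $Q$; $K_1\#P$ is the connected sum. A $1$-tangle is a properly embedded oriented arc in a $3$-ball up to isotopy rel boundary, drawn oriented top to bottom with top arc $b_0$ and bottom arc $b_1$; its closure joins the ends by a trivial arc; every knot $K$ is the closure of a $1$-tangle $T$, unique up to isotopy (end arcs need not have equal colors). For $e\in Q$, $\mathrm{Col}^e_Q(T)$ is the set of colorings $C$ of $T$ with $C(b_0)=e$, and $\Psi^e_Q(K)=\sum_{C\in \mathrm{Col}^e_Q(T)} C(b_1)$, an element of the free $\mathbb{Z}$-module with basis $F_e=\{b\in Q: R_b=R_e\}$. *)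

theory Defs
  imports Main
begin

definition quandle :: "'a set \<Rightarrow> ('a \<Rightarrow> 'a \<Rightarrow> 'a) \<Rightarrow> bool" where
  "quandle Q op \<longleftrightarrow>
     (\<forall>a\<in>Q. \<forall>b\<in>Q. op a b \<in> Q) \<and>
     (\<forall>a\<in>Q. op a a = a) \<and>
     (\<forall>b\<in>Q. \<forall>c\<in>Q. \<exists>!a. a \<in> Q \<and> op a b = c) \<and>
     (\<forall>a\<in>Q. \<forall>b\<in>Q. \<forall>c\<in>Q. op (op a b) c = op (op a c) (op b c))"

definition Rmap :: "('a \<Rightarrow> 'a \<Rightarrow> 'a) \<Rightarrow> 'a \<Rightarrow> 'a \<Rightarrow> 'a" where
  "Rmap op a = (\<lambda>x. op x a)"

definition Rinv :: "'a set \<Rightarrow> ('a \<Rightarrow> 'a \<Rightarrow> 'a) \<Rightarrow> 'a \<Rightarrow> 'a \<Rightarrow> 'a" where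
  "Rinv Q op a = (\<lambda>x. THE y. y \<in> Q \<and> op y a = x)"

text \<open>Inn(Q): the group generated by the R_a (as maps, relevant only on Q).\<close>
inductive_set Inn :: "'a set \<Rightarrow> ('a \<Rightarrow> 'a \<Rightarrow> 'a) \<Rightarrow> ('a \<Rightarrow> 'a) set"
  for Q op where
  Inn_id: "id \<in> Inn Q op"
| Inn_R: "a \<in> Q \<Longrightarrow> g \<in> Inn Q op \<Longrightarrow> Rmap op a \<circ> g \<in> Inn Q op"
| Inn_Rinv: "a \<in> Q \<Longrightarrow> g \<in> Inn Q op \<Longrightarrow> Rinv Q op a \<circ> g \<in> Inn Q op"

definition connected_quandle :: "'a set \<Rightarrow> ('a \<Rightarrow> 'a \<Rightarrow> 'a) \<Rightarrow> bool" where
  "connected_quandle Q op \<longleftrightarrow> (\<forall>x\<in>Q. \<forall>y\<in>Q. \<exists>g\<in>Inn Q op. g x = y)"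

text \<open>A 1-tangle diagram with n crossings, traversed top to bottom, is encoded by
  the list of its n under-passages in order. The arcs are numbered 0..n: arc i is the
  incoming under-arc of the i-th under-passage and arc i+1 the outgoing one; arc 0 is
  the top arc b0 and arc n the bottom arc b1. The entry (j, s) of crossing i records
  the index j of the over-arc and the sign s of the crossing (True = positive).\<close>
type_synonym tangle = "(nat \<times> bool) list"

definition wf_tangle :: "tangle \<Rightarrow> bool" where
  "wf_tangle T \<longleftrightarrow> (\<forall>(j, s)\<in>set T. j \<le> length T)"

text \<open>Coloring condition at a crossing: over colour y, under arcs x (before) and x' (after).
  Positive crossing: x' = x * y;  negative crossing (incoming under-arc is the other one):
  x = x' * y.\<close>
definition crossing_ok :: "('a \<Rightarrow> 'a \<Rightarrow> 'a) \<Rightarrow> bool \<Rightarrow> 'a \<Rightarrow> 'a \<Rightarrow> 'a \<Rightarrow> bool" where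
  "crossing_ok op s x x' y \<longleftrightarrow> (if s then x' = op x y else x = op x' y)"

definition colorings :: "'a set \<Rightarrow> ('a \<Rightarrow> 'a \<Rightarrow> 'a) \<Rightarrow> tangle \<Rightarrow> 'a list set" where
  "colorings Q op T = {C. length C = Suc (length T) \<and> set C \<subseteq> Q \<and>
      (\<forall>i<length T. crossing_ok op (snd (T ! i)) (C ! i) (C ! Suc i) (C ! fst (T ! i)))}"

text \<open>Col_Q of the closure of T (closure identifies the top and bottom arcs).\<close>
definition Col_closure :: "'a set \<Rightarrow> ('a \<Rightarrow> 'a \<Rightarrow> 'a) \<Rightarrow> tangle \<Rightarrow> nat" where
  "Col_closure Q op T = card {C \<in> colorings Q op T. C ! 0 = C ! length T}"

text \<open>Composition of 1-tangles (T1 on top of T2); its closure is the connected sum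
  of the closures.\<close>
definition tangle_comp :: "tangle \<Rightarrow> tangle \<Rightarrow> tangle" where
  "tangle_comp T1 T2 = T1 @ map (\<lambda>(j, s). (j + length T1, s)) T2"

text \<open>Psi^e_Q(K) as an element of the free Z-module on Q (supported in F_e):
  the coefficient of b is the number of colorings C with C(b0) = e and C(b1) = b.\<close>
definition Psi :: "'a set \<Rightarrow> ('a \<Rightarrow> 'a \<Rightarrow> 'a) \<Rightarrow> 'a \<Rightarrow> tangle \<Rightarrow> 'a \<Rightarrow> int" where
  "Psi Q op e T = (\<lambda>b. int (card {C \<in> colorings Q op T. C ! 0 = e \<and> C ! length T = b}))"

end

theory Submission
  imports Defs
begin

definition aut :: "'a set \<Rightarrow> ('a \<Rightarrow> 'a \<Rightarrow> 'a) \<Rightarrow> ('a \<Rightarrow> 'a) \<Rightarrow> bool" where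
  "aut Q op g \<longleftrightarrow> bij_betw g Q Q \<and> (\<forall>x\<in>Q. \<forall>y\<in>Q. g (op x y) = op (g x) (g y))"

lemma aut_Rmap: assumes "quandle Q op" "a\<in>Q" shows "aut Q op (Rmap op a)"
proof -
  have cl: "\<And>x y. x\<in>Q \<Longrightarrow> y\<in>Q \<Longrightarrow> op x y \<in> Q" using assms(1) unfolding quandle_def by blast
  have ex: "\<And>c. c\<in>Q \<Longrightarrow> \<exists>!x. x\<in>Q \<and> op x a = c" using assms unfolding quandle_def by blast
  have dist: "\<And>x y. x\<in>Q \<Longrightarrow> y\<in>Q \<Longrightarrow> op (op x y) a = op (op x a) (op y a)"
    using assms unfolding quandle_def by blast
  have "bij_betw (Rmap op a) Q Q"
    unfolding bij_betw_def inj_on_def Rmap_def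
  proof (intro conjI ballI impI equalityI subsetI)
    fix x y assume "x\<in>Q" "y\<in>Q" "op x a = op y a"
    then have c: "op x a \<in> Q" using cl assms(2) by blast
    from ex[OF c] obtain z where "\<forall>w. w \<in> Q \<and> op w a = op x a \<longrightarrow> w = z" by (elim ex1E) blast
    then show "x = y" using \<open>x\<in>Q\<close> \<open>y\<in>Q\<close> \<open>op x a = op y a\<close> by metis
  next
    fix z assume "z \<in> (\<lambda>x. op x a) ` Q" then show "z \<in> Q" using cl assms(2) by auto
  next
    fix z assume "z\<in>Q" then obtain x where "x\<in>Q" "op x a = z" using ex by blast
    then show "z \<in> (\<lambda>x. op x a) ` Q" by auto
  qed
  then show ?thesis unfolding aut_def using dist by (simp add: Rmap_def)
qed

lemma aut_inv: assumes "aut Q op g" "quandle Q op" shows "aut Q op (inv_into Q g)"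
proof -
  have b: "bij_betw g Q Q" and h: "\<forall>x\<in>Q. \<forall>y\<in>Q. g (op x y) = op (g x) (g y)"
    using assms(1) by (auto simp: aut_def)
  have cl: "\<And>x y. x\<in>Q \<Longrightarrow> y\<in>Q \<Longrightarrow> op x y \<in> Q" using assms(2) unfolding quandle_def by blast
  have bi: "bij_betw (inv_into Q g) Q Q" using b by (rule bij_betw_inv_into)
  have inj: "inj_on g Q" using b by (simp add: bij_betw_def)
  have "inv_into Q g (op x y) = op (inv_into Q g x) (inv_into Q g y)" if "x\<in>Q" "y\<in>Q" for x y
  proof -
    let ?u = "inv_into Q g x" and ?v = "inv_into Q g y"
    have u: "?u \<in> Q" "g ?u = x" using bi b that(1) bij_betw_inv_into_right bij_betw_apply by fastforce+
    have v: "?v \<in> Q" "g ?v = y" using bi b that(2) bij_betw_inv_into_right bij_betw_apply by fastforce+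
    have "g (op ?u ?v) = op x y" using h u v by simp
    then have "inv_into Q g (op x y) = inv_into Q g (g (op ?u ?v))" by simp
    also have "\<dots> = op ?u ?v" using inv_into_f_f[OF inj cl[OF u(1) v(1)]] .
    finally show ?thesis .
  qed
  then show ?thesis using bi by (simp add: aut_def)
qed

lemma aut_cong: assumes "aut Q op g" "quandle Q op" "\<And>x. x\<in>Q \<Longrightarrow> f x = g x" shows "aut Q op f"
proof -
  have cl: "\<And>x y. x\<in>Q \<Longrightarrow> y\<in>Q \<Longrightarrow> op x y \<in> Q" using assms(2) unfolding quandle_def by blast
  have eq: "bij_betw f Q Q = bij_betw g Q Q" by (rule bij_betw_cong) (rule assms(3))
  have "f (op x y) = op (f x) (f y)" if "x\<in>Q" "y\<in>Q" for x y
  proof -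
    have "f (op x y) = g (op x y)" using assms(3) cl that by blast
    also have "\<dots> = op (g x) (g y)" using assms(1) that unfolding aut_def by blast
    also have "\<dots> = op (f x) (f y)" using assms(3) that by simp
    finally show ?thesis .
  qed
  then show ?thesis using assms(1) eq unfolding aut_def by blast
qed

lemma aut_comp: assumes "aut Q op f" "aut Q op g" shows "aut Q op (f \<circ> g)"
proof -
  have "bij_betw (f \<circ> g) Q Q" using assms bij_betw_trans unfolding aut_def by blast
  moreover have "\<And>x. x\<in>Q \<Longrightarrow> g x \<in> Q" using assms(2) unfolding aut_def bij_betw_def by blast
  ultimately show ?thesis using assms unfolding aut_def by simp
qed

lemma aut_Rinv: assumes "quandle Q op" "a\<in>Q" shows "aut Q op (Rinv Q op a)"
proof (rule aut_cong[OF aut_inv[OF aut_Rmap[OF assms] assms(1)] assms(1)])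
  fix x assume x: "x\<in>Q"
  have b: "bij_betw (Rmap op a) Q Q" using aut_Rmap[OF assms] by (simp add: aut_def)
  let ?y = "inv_into Q (Rmap op a) x"
  have y: "?y \<in> Q" "op ?y a = x"
    using b x bij_betw_inv_into_right[OF b x] bij_betw_apply[OF bij_betw_inv_into[OF b] x]
    by (auto simp: Rmap_def)
  have ex: "\<exists>!z. z\<in>Q \<and> op z a = x" using assms x unfolding quandle_def by blast
  show "Rinv Q op a x = ?y" unfolding Rinv_def
    by (rule the1_equality[OF ex]) (use y in auto)
qed

lemma Inn_aut: assumes "quandle Q op" "g \<in> Inn Q op" shows "aut Q op g"
  using assms(2)
proof induction
  case Inn_id then show ?case unfolding aut_def using bij_betw_id[of Q] by (simp add: id_def)
next
  case (Inn_R a g)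
  then have a: "a\<in>Q" and ag: "aut Q op g" by simp_all
  show ?case by (rule aut_comp[OF aut_Rmap[OF assms(1) a] ag])
next
  case (Inn_Rinv a g)
  then have a: "a\<in>Q" and ag: "aut Q op g" by simp_all
  show ?case by (rule aut_comp[OF aut_Rinv[OF assms(1) a] ag])
qed

lemma map_col: assumes "aut Q op g" "wf_tangle T" "C \<in> colorings Q op T"
  shows "map g C \<in> colorings Q op T"
proof -
  have b: "bij_betw g Q Q" and h: "\<forall>x\<in>Q. \<forall>y\<in>Q. g (op x y) = op (g x) (g y)"
    using assms(1) by (auto simp: aut_def)
  have C: "length C = Suc (length T)" "set C \<subseteq> Q"
    "\<forall>i<length T. crossing_ok op (snd (T ! i)) (C ! i) (C ! Suc i) (C ! fst (T ! i))"
    using assms(3) by (auto simp: colorings_def)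
  have "set (map g C) \<subseteq> Q" using C(2) b by (auto simp: bij_betw_def)
  moreover have "crossing_ok op (snd (T ! i)) (map g C ! i) (map g C ! Suc i) (map g C ! fst (T ! i))"
    if i: "i < length T" for i
  proof -
    have "T ! i \<in> set T" using i by simp
    then have j: "fst (T ! i) \<le> length T" using assms(2) unfolding wf_tangle_def by auto
    have q: "C ! i \<in> Q" "C ! Suc i \<in> Q" "C ! fst (T ! i) \<in> Q"
      using C i j by (auto intro!: subsetD[OF C(2)] nth_mem)
    have e: "map g C ! i = g (C ! i)" "map g C ! Suc i = g (C ! Suc i)"
      "map g C ! fst (T ! i) = g (C ! fst (T ! i))" using C i j by auto
    show ?thesis using C(3) i q h unfolding e crossing_ok_def by (auto split: if_splits)
  qed
  ultimately show ?thesis using C by (simp add: colorings_def)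
qed

definition S :: "'a set \<Rightarrow> ('a \<Rightarrow> 'a \<Rightarrow> 'a) \<Rightarrow> tangle \<Rightarrow> 'a \<Rightarrow> 'a \<Rightarrow> 'a list set" where
  "S Q op T a b = {C \<in> colorings Q op T. C ! 0 = a \<and> C ! length T = b}"

lemma finite_col: "finite Q \<Longrightarrow> finite (colorings Q op T)"
  by (rule finite_subset[OF _ finite_lists_length_eq[of Q "Suc (length T)"]])
     (auto simp: colorings_def)

lemma S_le: assumes "aut Q op g" "wf_tangle T" "finite Q"
  shows "card (S Q op T a b) \<le> card (S Q op T (g a) (g b))"
proof (rule card_inj_on_le)
  have inj: "inj_on g Q" using assms(1) by (simp add: aut_def bij_betw_def)
  show "inj_on (map g) (S Q op T a b)"
  proof (rule inj_onI)
    fix x y assume "x \<in> S Q op T a b" "y \<in> S Q op T a b" "map g x = map g y"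
    then show "x = y" using inj_on_map_eq_map[of g x y] inj_on_subset[OF inj]
      by (auto simp: S_def colorings_def)
  qed
  have gQ: "\<And>x. x\<in>Q \<Longrightarrow> g x \<in> Q" using assms(1) unfolding aut_def bij_betw_def by blast
  show "map g ` S Q op T a b \<subseteq> S Q op T (g a) (g b)"
  proof
    fix D assume "D \<in> map g ` S Q op T a b"
    then obtain C where C: "C \<in> S Q op T a b" "D = map g C" by blast
    then have "C \<in> colorings Q op T" "length C = Suc (length T)" "C!0 = a" "C ! length T = b"
      by (auto simp: S_def colorings_def)
    then show "D \<in> S Q op T (g a) (g b)" using map_col[OF assms(1,2)] C(2) by (simp add: S_def)
  qed
  show "finite (S Q op T (g a) (g b))" using finite_col[OF assms(3)] by (simp add: S_def)
qed

lemma S_eq: assumes "aut Q op g" "wf_tangle T" "finite Q" "quandle Q op" "a\<in>Q" "b\<in>Q"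
  shows "card (S Q op T (g a) (g b)) = card (S Q op T a b)"
proof -
  have inj: "inj_on g Q" using assms(1) by (simp add: aut_def bij_betw_def)
  have "card (S Q op T (g a) (g b)) \<le> card (S Q op T (inv_into Q g (g a)) (inv_into Q g (g b)))"
    by (rule S_le[OF aut_inv[OF assms(1,4)] assms(2,3)])
  also have "\<dots> = card (S Q op T a b)" using inj assms(5,6) by simp
  finally have "card (S Q op T (g a) (g b)) \<le> card (S Q op T a b)" .
  then show ?thesis using S_le[OF assms(1-3), of a b] by linarith
qed

lemma N_eq:
  assumes "finite Q" "quandle Q op" "connected_quandle Q op" "e \<in> Q"
    "wf_tangle T1" "wf_tangle T2" "Psi Q op e T1 = Psi Q op e T2" "a\<in>Q" "b\<in>Q"
  shows "card (S Q op T1 a b) = card (S Q op T2 a b)"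
proof -
  obtain g where g: "g \<in> Inn Q op" "g e = a" using assms(3,4,8) unfolding connected_quandle_def by blast
  have ag: "aut Q op g" using Inn_aut[OF assms(2) g(1)] .
  have b: "bij_betw g Q Q" using ag by (simp add: aut_def)
  let ?b = "inv_into Q g b"
  have b': "?b \<in> Q" "g ?b = b"
    using bij_betw_inv_into_right[OF b assms(9)] bij_betw_apply[OF bij_betw_inv_into[OF b] assms(9)] by auto
  have "card (S Q op T1 a b) = card (S Q op T1 e ?b)"
    using S_eq[OF ag assms(5,1,2,4) b'(1)] g b' by simp
  also have "\<dots> = card (S Q op T2 e ?b)"
    using fun_cong[OF assms(7), of ?b] by (simp add: Psi_def S_def)
  also have "\<dots> = card (S Q op T2 a b)"
    using S_eq[OF ag assms(6,1,2,4) b'(1)] g b' by simp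
  finally show ?thesis .
qed

definition Pairs :: "'a set \<Rightarrow> ('a \<Rightarrow> 'a \<Rightarrow> 'a) \<Rightarrow> tangle \<Rightarrow> tangle \<Rightarrow> ('a list \<times> 'a list) set" where
  "Pairs Q op T P = {(C1, C2). C1 \<in> colorings Q op T \<and> C2 \<in> colorings Q op P \<and>
     C1 ! 0 = C2 ! length P \<and> C1 ! length T = C2 ! 0}"

lemma pairs_card: assumes "finite Q"
  shows "card (Pairs Q op T P) =
    (\<Sum>ab\<in>Q\<times>Q. card (S Q op T (fst ab) (snd ab)) * card (S Q op P (snd ab) (fst ab)))"
proof -
  have eq: "Pairs Q op T P = (\<Union>ab\<in>Q\<times>Q. S Q op T (fst ab) (snd ab) \<times> S Q op P (snd ab) (fst ab))"
  proof (intro equalityI subsetI)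
    fix x assume x: "x \<in> Pairs Q op T P"
    obtain C1 C2 where c: "x = (C1, C2)" by (cases x)
    have c1: "set C1 \<subseteq> Q" "length C1 = Suc (length T)" using x c by (auto simp: Pairs_def colorings_def)
    have "C1 ! 0 \<in> Q" "C1 ! length T \<in> Q" using c1 nth_mem[of 0 C1] nth_mem[of "length T" C1] by auto
    then show "x \<in> (\<Union>ab\<in>Q\<times>Q. S Q op T (fst ab) (snd ab) \<times> S Q op P (snd ab) (fst ab))"
      using x c by (auto simp: Pairs_def S_def intro!: bexI[of _ "(C1 ! 0, C1 ! length T)"])
  next
    fix x assume "x \<in> (\<Union>ab\<in>Q\<times>Q. S Q op T (fst ab) (snd ab) \<times> S Q op P (snd ab) (fst ab))"
    then show "x \<in> Pairs Q op T P" by (auto simp: Pairs_def S_def)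
  qed
  have "card (Pairs Q op T P) = (\<Sum>ab\<in>Q\<times>Q. card (S Q op T (fst ab) (snd ab) \<times> S Q op P (snd ab) (fst ab)))"
    unfolding eq
  proof (rule card_UN_disjoint)
    show "finite (Q \<times> Q)" using assms by simp
    show "\<forall>i\<in>Q \<times> Q. finite (S Q op T (fst i) (snd i) \<times> S Q op P (snd i) (fst i))"
      using finite_col[OF assms] by (simp add: S_def)
    show "\<forall>i\<in>Q \<times> Q. \<forall>j\<in>Q \<times> Q. i \<noteq> j \<longrightarrow>
      (S Q op T (fst i) (snd i) \<times> S Q op P (snd i) (fst i)) \<inter>
      (S Q op T (fst j) (snd j) \<times> S Q op P (snd j) (fst j)) = {}"
      by (auto simp: S_def prod_eq_iff)
  qed
  then show ?thesis by (simp add: card_cartesian_product)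
qed

lemma comp_len: "length (tangle_comp T P) = length T + length P"
  by (simp add: tangle_comp_def)
lemma comp_nth1: "i < length T \<Longrightarrow> tangle_comp T P ! i = T ! i"
  by (simp add: tangle_comp_def nth_append)
lemma comp_nth2: "k < length P \<Longrightarrow> tangle_comp T P ! (length T + k) = (length T + fst (P ! k), snd (P ! k))"
  by (simp add: tangle_comp_def nth_append split: prod.splits)

lemma app_nth1: "length C1 = Suc n \<Longrightarrow> i \<le> n \<Longrightarrow> (C1 @ tl C2) ! i = C1 ! i"
  by (simp add: nth_append)
lemma app_nth2: assumes "length C1 = Suc n" "C1 ! n = C2 ! 0" "k < length C2"
  shows "(C1 @ tl C2) ! (n + k) = C2 ! k"
proof (cases k)
  case 0 then show ?thesis using assms by (simp add: nth_append)
next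
  case (Suc k') then show ?thesis using assms by (simp add: nth_append nth_tl)
qed

lemma closure_card: assumes "wf_tangle T" "wf_tangle P"
  shows "Col_closure Q op (tangle_comp T P) = card (Pairs Q op T P)"
proof -
  let ?n = "length T" and ?m = "length P"
  let ?D = "{C \<in> colorings Q op (tangle_comp T P). C ! 0 = C ! length (tangle_comp T P)}"
  let ?f = "\<lambda>C. (take (Suc ?n) C, drop ?n C)"
  let ?g = "\<lambda>(C1::'a list, C2::'a list). C1 @ tl C2"
  have wT: "\<And>i. i < ?n \<Longrightarrow> fst (T ! i) \<le> ?n" using assms(1) unfolding wf_tangle_def
    by (metis nth_mem prod.collapse case_prodD)
  have wP: "\<And>i. i < ?m \<Longrightarrow> fst (P ! i) \<le> ?m" using assms(2) unfolding wf_tangle_def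
    by (metis nth_mem prod.collapse case_prodD)
  have "bij_betw ?f ?D (Pairs Q op T P)"
  proof (rule bij_betw_byWitness[where f'="?g"])
    show "\<forall>C\<in>?D. ?g (?f C) = C"
    proof
      fix C assume "C \<in> ?D"
      then have "length C = Suc (?n + ?m)" by (simp add: colorings_def comp_len)
      then show "?g (?f C) = C" by (simp add: tl_drop drop_Suc[symmetric])
    qed
    show "\<forall>x\<in>Pairs Q op T P. ?f (?g x) = x"
    proof
      fix x assume x: "x \<in> Pairs Q op T P"
      obtain C1 C2 where c: "x = (C1, C2)" by (cases x)
      have l: "length C1 = Suc ?n" "length C2 = Suc ?m" "C1 ! ?n = C2 ! 0"
        using x c by (auto simp: Pairs_def colorings_def)
      have d: "drop ?n C1 = [C1 ! ?n]"
        using Cons_nth_drop_Suc[of ?n C1] l by simp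
      have "C2 = C2 ! 0 # tl C2" using l by (cases C2) auto
      then show "?f (?g x) = x" using c l d by simp
    qed
    show "?f ` ?D \<subseteq> Pairs Q op T P"
    proof
      fix y assume "y \<in> ?f ` ?D"
      then obtain C where C: "C \<in> ?D" "y = ?f C" by blast
      have L: "length C = Suc (?n + ?m)" "set C \<subseteq> Q" and
        cr: "\<And>i. i < ?n + ?m \<Longrightarrow> crossing_ok op (snd (tangle_comp T P ! i)) (C ! i) (C ! Suc i)
           (C ! fst (tangle_comp T P ! i))" and cl: "C ! 0 = C ! (?n + ?m)"
        using C(1) by (auto simp: colorings_def comp_len)
      have c1: "take (Suc ?n) C \<in> colorings Q op T"
      proof -
        have "crossing_ok op (snd (T ! i)) (take (Suc ?n) C ! i) (take (Suc ?n) C ! Suc i)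
            (take (Suc ?n) C ! fst (T ! i))" if "i < ?n" for i
          using cr[of i] that wT[OF that] by (simp add: comp_nth1)
        moreover have "set (take (Suc ?n) C) \<subseteq> Q" using L(2) set_take_subset by fast
        ultimately show ?thesis using L by (simp add: colorings_def)
      qed
      have c2: "drop ?n C \<in> colorings Q op P"
      proof -
        have "crossing_ok op (snd (P ! k)) (drop ?n C ! k) (drop ?n C ! Suc k)
            (drop ?n C ! fst (P ! k))" if "k < ?m" for k
          using cr[of "?n + k"] that wP[OF that] L(1) by (simp add: comp_nth2)
        moreover have "set (drop ?n C) \<subseteq> Q" using L(2) set_drop_subset by fast
        ultimately show ?thesis using L by (simp add: colorings_def)
      qed
      show "y \<in> Pairs Q op T P" using C(2) c1 c2 cl L(1) by (simp add: Pairs_def)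
    qed
    show "?g ` Pairs Q op T P \<subseteq> ?D"
    proof
      fix y assume "y \<in> ?g ` Pairs Q op T P"
      then obtain C1 C2 where x: "(C1, C2) \<in> Pairs Q op T P" and y: "y = C1 @ tl C2" by auto
      have l: "length C1 = Suc ?n" "length C2 = Suc ?m" "C1 ! ?n = C2 ! 0" "C1 ! 0 = C2 ! ?m"
        "set C1 \<subseteq> Q" "set C2 \<subseteq> Q"
        and cr1: "\<And>i. i < ?n \<Longrightarrow> crossing_ok op (snd (T ! i)) (C1 ! i) (C1 ! Suc i) (C1 ! fst (T ! i))"
        and cr2: "\<And>i. i < ?m \<Longrightarrow> crossing_ok op (snd (P ! i)) (C2 ! i) (C2 ! Suc i) (C2 ! fst (P ! i))"
        using x by (auto simp: Pairs_def colorings_def)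
      have len: "length y = Suc (?n + ?m)" using y l by simp
      have st: "set y \<subseteq> Q" using y l(5,6) by (cases C2) auto
      have cr: "crossing_ok op (snd (tangle_comp T P ! i)) (y ! i) (y ! Suc i) (y ! fst (tangle_comp T P ! i))"
        if i: "i < ?n + ?m" for i
      proof (cases "i < ?n")
        case True
        then show ?thesis using cr1[OF True] wT[OF True] app_nth1[OF l(1)] y
          by (simp add: comp_nth1)
      next
        case False
        define k where "k = i - ?n"
        have k: "i = ?n + k" "k < ?m" using False i by (simp_all add: k_def)
        have "y ! (?n + k) = C2 ! k" "y ! (?n + Suc k) = C2 ! Suc k"
          "y ! (?n + fst (P ! k)) = C2 ! fst (P ! k)"
          using app_nth2[OF l(1) l(3), of k] app_nth2[OF l(1) l(3), of "Suc k"]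
            app_nth2[OF l(1) l(3), of "fst (P ! k)"] y k l(2) wP[OF k(2)] by auto
        then show ?thesis using cr2[OF k(2)] k by (simp add: comp_nth2)
      qed
      have "y ! 0 = y ! (?n + ?m)" using app_nth1[OF l(1), of 0] app_nth2[OF l(1) l(3), of ?m] l y by simp
      then show "y \<in> ?D" using len st cr by (simp add: colorings_def comp_len)
    qed
  qed
  then show ?thesis unfolding Col_closure_def by (simp add: bij_betw_same_card comp_len)
qed

theorem mainTheorem2:
  fixes Q :: "'a set" and op :: "'a \<Rightarrow> 'a \<Rightarrow> 'a" and e :: 'a
    and T1 T2 P :: tangle
  assumes "finite Q" and "quandle Q op" and "connected_quandle Q op" and "e \<in> Q"
    and "wf_tangle T1" and "wf_tangle T2" and "wf_tangle P"
    and "Col_closure Q op (tangle_comp T1 P) \<noteq> Col_closure Q op (tangle_comp T2 P)"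
  shows "Psi Q op e T1 \<noteq> Psi Q op e T2"
proof
  assume ps: "Psi Q op e T1 = Psi Q op e T2"
  have "(\<Sum>ab\<in>Q\<times>Q. card (S Q op T1 (fst ab) (snd ab)) * card (S Q op P (snd ab) (fst ab))) =
        (\<Sum>ab\<in>Q\<times>Q. card (S Q op T2 (fst ab) (snd ab)) * card (S Q op P (snd ab) (fst ab)))"
    by (rule sum.cong) (auto simp: N_eq[OF assms(1-6) ps])
  then show False using assms(8) closure_card[OF assms(5,7), of Q op] closure_card[OF assms(6,7), of Q op]
    pairs_card[OF assms(1), of op T1 P] pairs_card[OF assms(1), of op T2 P] by simp
qed

end
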